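(* Let $\phi:\mathbb{R}^2\to[-\infty,0]$ be a Borel function. Then $\phi\le\phi_G$ for some $G\in\mathfrak{M}$ if and only if $$(1-t)\phi(y^0)+t\,\phi(y^1)\le t(1-t)\,c(y^0,y^1),\qquad y^0,y^1\in\mathbb{R}^2,\ t\in[0,1].$$ The set of such functions $\phi$ is convex.
   Context: $c(x,y)=(x_1-y_1)(x_2-y_2)$ for $x,y\in\mathbb{R}^2$. $\mathfrak{M}$: family of maximal monotone sets $G\subset\mathbb{R}^2$ (monotone: $c(r,s)\ge0$ for all $r,s\in G$; maximal: not a proper subset of a monotone set). $\phi_G(y)=\inf_{x\in G}c(x,y)$. *)

theory Defs
  imports "HOL-Analysis.Analysis"
begin

definition cst :: "real \<times> real \<Rightarrow> real \<times> real \<Rightarrow> real" where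
  "cst x y = (fst x - fst y) * (snd x - snd y)"

definition monotone_set :: "(real \<times> real) set \<Rightarrow> bool" where
  "monotone_set G \<longleftrightarrow> (\<forall>r\<in>G. \<forall>s\<in>G. cst r s \<ge> 0)"

definition maximal_monotone :: "(real \<times> real) set \<Rightarrow> bool" where
  "maximal_monotone G \<longleftrightarrow> monotone_set G \<and> (\<forall>H. monotone_set H \<and> G \<subseteq> H \<longrightarrow> H = G)"

definition phiG :: "(real \<times> real) set \<Rightarrow> real \<times> real \<Rightarrow> ereal" where
  "phiG G y = (INF x\<in>G. ereal (cst x y))"

definition dominated_set :: "(real \<times> real \<Rightarrow> ereal) set" where
  "dominated_set = {\<phi>. \<phi> \<in> borel_measurable borel \<and> (\<forall>y. \<phi> y \<le> 0) \<and>
      (\<exists>G. maximal_monotone G \<and> (\<forall>y. \<phi> y \<le> phiG G y))}"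

end

theory Submission
  imports Defs
begin


lemma minkowski2:
  fixes a b A B :: real
  shows "sqrt ((a+b)^2 + (A+B)^2) \<le> sqrt (a^2+A^2) + sqrt (b^2+B^2)"
proof -
  have "cmod (Complex (a+b) (A+B)) \<le> cmod (Complex a A) + cmod (Complex b B)"
    using norm_triangle_ineq[of "Complex a A" "Complex b B"] by (simp add: complex_add)
  thus ?thesis by (simp add: cmod_def)
qed

lemma key_claim:
  fixes al be K :: real
  assumes al: "al \<ge> 0" and be: "be \<ge> 0"
    and H: "\<And>t. 0 \<le> t \<Longrightarrow> t \<le> 1 \<Longrightarrow> t*(1-t)*K \<le> (1-t)*al + t*be"
  shows "K \<le> (sqrt al + sqrt be)^2"
proof (rule ccontr)
  assume "\<not> ?thesis"
  hence Kb: "K > (sqrt al + sqrt be)^2" by simp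
  define A where "A = sqrt al"
  define B where "B = sqrt be"
  have A0: "A \<ge> 0" "B \<ge> 0" unfolding A_def B_def using al be by auto
  have alA: "al = A^2" "be = B^2" unfolding A_def B_def using al be by auto
  have Kp: "K > 0" using Kb alA A0 by (smt (verit) zero_le_power2)
  show False
  proof (cases "A = 0")
    case True
    hence a0: "al = 0" using alA by simp
    have bK: "be < K" using Kb True alA by simp
    define t where "t = (K - be)/(2*K)"
    have t0: "0 < t" "t \<le> 1" unfolding t_def using bK Kp be by (auto simp: field_simps)
    have "t*(1-t)*K \<le> t*be" using H[of t] t0 a0 by simp
    hence "(1-t)*K \<le> be" using t0 by (simp add: mult.assoc)
    moreover have "(1-t)*K = (K+be)/2" unfolding t_def using Kp by (simp add: field_simps)
    ultimately show False using bK by simp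
  next
    case False
    hence Ap: "A > 0" using A0 by simp
    show False
    proof (cases "B = 0")
      case True
      hence b0: "be = 0" using alA by simp
      have aK: "al < K" using Kb True alA by simp
      define t where "t = (K + al)/(2*K)"
      have t0: "0 \<le> t" "t < 1" unfolding t_def using aK Kp al by (auto simp: field_simps)
      have "t*(1-t)*K \<le> (1-t)*al" using H[of t] t0 b0 by simp
      hence "t*K \<le> al" using t0 by (simp add: mult.commute mult.left_commute)
      moreover have "t*K = (K+al)/2" unfolding t_def using Kp by (simp add: field_simps)
      ultimately show False using aK by simp
    next
      case False
      hence Bp: "B > 0" using A0 by simp
      define s where "s = A + B"
      have sp: "s > 0" using Ap Bp s_def by simp
      define t where "t = A / s"
      have t1: "1 - t = B / s" unfolding t_def s_def using sp s_def by (simp add: field_simps)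
      have t0: "0 \<le> t" "t \<le> 1" unfolding t_def using Ap Bp sp s_def by auto
      have e1: "(1-t)*al + t*be = A*B"
      proof -
        have "(1-t)*al + t*be = (B/s)*A^2 + (A/s)*B^2" unfolding t1 unfolding t_def alA by simp
        also have "\<dots> = (A * B * s) / s" unfolding s_def by (simp add: algebra_simps power2_eq_square add_divide_distrib)
        also have "\<dots> = A*B" using sp by simp
        finally show ?thesis .
      qed
      have e2: "t*(1-t)*K = A*B*K/s^2" unfolding t1 unfolding t_def
        by (simp add: field_simps power2_eq_square)
      have "A*B*K/s^2 > A*B" using Kb sp Ap Bp unfolding s_def A_def[symmetric] B_def[symmetric]
        by (simp add: field_simps)
      thus False using H[OF t0] e1 e2 by simp
    qed
  qed
qed

lemma pair_bound:
  fixes u0 v0 u1 v1 al be w :: real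
  assumes al: "al \<ge> 0" and be: "be \<ge> 0"
    and H: "\<And>t. 0 \<le> t \<Longrightarrow> t \<le> 1 \<Longrightarrow> t*(1-t)*((v0-v1)^2 - (u0-u1)^2) \<le> (1-t)*al + t*be"
  shows "v0 - v1 \<le> sqrt ((w-u0)^2 + al) + sqrt ((w-u1)^2 + be)"
proof (cases "v0 - v1 \<le> 0")
  case True thus ?thesis by (smt (verit) real_sqrt_ge_zero zero_le_power2 al be)
next
  case False
  have c: "(v0-v1)^2 - (u0-u1)^2 \<le> (sqrt al + sqrt be)^2" by (rule key_claim[OF al be H])
  have m: "sqrt (((w-u0)+(u1-w))^2 + (sqrt al + sqrt be)^2) \<le> sqrt ((w-u0)^2 + (sqrt al)^2) + sqrt ((u1-w)^2 + (sqrt be)^2)"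
    by (rule minkowski2)
  have "(u1-w)^2 = (w-u1)^2" by (simp add: power2_commute)
  hence m2: "sqrt ((u1-u0)^2 + (sqrt al + sqrt be)^2) \<le> sqrt ((w-u0)^2 + al) + sqrt ((w-u1)^2 + be)"
    using m al be by simp
  have "(v0-v1)^2 \<le> (u1-u0)^2 + (sqrt al + sqrt be)^2" using c by (simp add: power2_commute)
  hence "sqrt ((v0-v1)^2) \<le> sqrt ((u1-u0)^2 + (sqrt al + sqrt be)^2)" by (rule real_sqrt_le_mono)
  hence "v0 - v1 \<le> sqrt ((u1-u0)^2 + (sqrt al + sqrt be)^2)" using False by simp
  thus ?thesis using m2 by simp
qed



definition Cr :: "(real \<times> real \<Rightarrow> ereal) \<Rightarrow> bool" where
  "Cr \<phi> \<longleftrightarrow> (\<forall>y0 y1 p0 p1 t. \<phi> y0 = ereal p0 \<longrightarrow> \<phi> y1 = ereal p1 \<longrightarrow> 0 \<le> t \<longrightarrow> t \<le> 1 \<longrightarrow>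
      (1-t)*p0 + t*p1 \<le> t*(1-t)*cst y0 y1)"

lemma minf_add_le: fixes a b c :: ereal shows "a = -\<infinity> \<Longrightarrow> b \<noteq> \<infinity> \<Longrightarrow> a + b \<le> c"
  by (cases b) auto

lemma cond_equiv:
  fixes \<phi> :: "real \<times> real \<Rightarrow> ereal"
  assumes le: "\<forall>y. \<phi> y \<le> 0"
  shows "(\<forall>y0 y1 t. 0 \<le> t \<and> t \<le> 1 \<longrightarrow>
              ereal (1 - t) * \<phi> y0 + ereal t * \<phi> y1 \<le> ereal (t * (1 - t) * cst y0 y1)) \<longleftrightarrow> Cr \<phi>"
proof
  assume H: "\<forall>y0 y1 t. 0 \<le> t \<and> t \<le> 1 \<longrightarrow>
              ereal (1 - t) * \<phi> y0 + ereal t * \<phi> y1 \<le> ereal (t * (1 - t) * cst y0 y1)"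
  show "Cr \<phi>" unfolding Cr_def
  proof (intro allI impI)
    fix y0 y1 :: "real \<times> real" and p0 p1 t :: real
    assume a: "\<phi> y0 = ereal p0" "\<phi> y1 = ereal p1" "0 \<le> t" "t \<le> (1::real)"
    show "(1-t)*p0 + t*p1 \<le> t*(1-t)*cst y0 y1" using H[rule_format, of t y0 y1] a by simp
  qed
next
  assume C: "Cr \<phi>"
  show "\<forall>y0 y1 t. 0 \<le> t \<and> t \<le> 1 \<longrightarrow>
              ereal (1 - t) * \<phi> y0 + ereal t * \<phi> y1 \<le> ereal (t * (1 - t) * cst y0 y1)"
  proof (intro allI impI)
    fix y0 y1 and t :: real
    assume t: "0 \<le> t \<and> t \<le> 1"
    have n0: "\<phi> y0 \<noteq> \<infinity>" "\<phi> y1 \<noteq> \<infinity>" using le[rule_format, of y0] le[rule_format, of y1] by auto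
    show "ereal (1 - t) * \<phi> y0 + ereal t * \<phi> y1 \<le> ereal (t * (1 - t) * cst y0 y1)"
    proof (cases "\<phi> y0")
      case (real p0) note r0 = real
      show ?thesis
      proof (cases "\<phi> y1")
        case (real p1)
        thus ?thesis using r0 C t unfolding Cr_def by (simp del: prod.collapse; blast)
      next
        case PInf thus ?thesis using n0 by simp
      next
        case MInf
        show ?thesis
        proof (cases "t = 0")
          case True thus ?thesis using r0 le[rule_format, of y0] by (simp add: zero_ereal_def[symmetric])
        next
          case False thus ?thesis using MInf r0 t by simp
        qed
      qed
    next
      case PInf thus ?thesis using n0 by simp
    next
      case MInf note m0 = MInf
      show ?thesis
      proof (cases "t = 1")
        case True thus ?thesis using le[rule_format, of y1] by (simp add: zero_ereal_def[symmetric])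
      next
        case False
        hence "ereal (1 - t) * \<phi> y0 = -\<infinity>" using m0 t by simp
        moreover have "ereal t * \<phi> y1 \<noteq> \<infinity>" using n0 t
          by (cases "\<phi> y1") auto
        ultimately show ?thesis by (rule minf_add_le)
      qed
    qed
  qed
qed

lemma cst_ident:
  "(1-t)*cst x y0 + t*cst x y1 = cst x ((1-t)* fst y0 + t* fst y1, (1-t)* snd y0 + t* snd y1) + t*(1-t)*cst y0 y1"
  unfolding cst_def by (simp add: algebra_simps)

lemma cst_sym: "cst x y = cst y x" unfolding cst_def by (simp add: algebra_simps)

lemma forward:
  assumes G: "maximal_monotone G" and d: "\<forall>y. \<phi> y \<le> phiG G y"
  shows "Cr \<phi>"
  unfolding Cr_def
proof (intro allI impI)
  fix y0 y1 :: "real \<times> real" and p0 p1 t :: real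
  assume a: "\<phi> y0 = ereal p0" "\<phi> y1 = ereal p1" "0 \<le> t" "t \<le> (1::real)"
  define yt where "yt = ((1-t)* fst y0 + t* fst y1, (1-t)* snd y0 + t* snd y1)"
  have lb: "\<phi> y \<le> ereal (cst x y)" if "x \<in> G" for x y
    using d[rule_format, of y] that unfolding phiG_def by (meson INF_lower order_trans)
  obtain x where x: "x \<in> G" "cst x yt \<le> 0"
  proof (rule ccontr)
    assume "\<not> thesis"
    hence pos: "\<forall>x\<in>G. cst x yt > 0" using that by force
    have mG: "monotone_set G" using G unfolding maximal_monotone_def by blast
    have "monotone_set (insert yt G)" unfolding monotone_set_def
    proof (intro ballI)
      fix r s assume r: "r \<in> insert yt G" and s: "s \<in> insert yt G"
      show "cst r s \<ge> 0"
      proof (cases "r = yt")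
        case True
        show ?thesis
        proof (cases "s = yt")
          case True thus ?thesis using \<open>r = yt\<close> unfolding cst_def by simp
        next
          case False thus ?thesis using s pos True cst_sym[of yt s] by (simp add: less_imp_le)
        qed
      next
        case False
        hence rG: "r \<in> G" using r by blast
        show ?thesis
        proof (cases "s = yt")
          case True thus ?thesis using rG pos by (simp add: less_imp_le)
        next
          case False thus ?thesis using s rG mG unfolding monotone_set_def by blast
        qed
      qed
    qed
    hence "insert yt G = G" using G unfolding maximal_monotone_def by blast
    hence "yt \<in> G" by blast
    hence "cst yt yt > 0" using pos by blast
    thus False unfolding cst_def by simp
  qed
  have "p0 \<le> cst x y0" "p1 \<le> cst x y1" using lb[OF x(1), of y0] lb[OF x(1), of y1] a by auto
  hence "(1-t)*p0 + t*p1 \<le> (1-t)*cst x y0 + t*cst x y1" using a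
    by (simp add: add_mono mult_left_mono)
  also have "\<dots> = cst x yt + t*(1-t)*cst y0 y1" unfolding yt_def by (rule cst_ident)
  also have "\<dots> \<le> t*(1-t)*cst y0 y1" using x by simp
  finally show "(1-t)*p0 + t*p1 \<le> t*(1-t)*cst y0 y1" .
qed



lemma sqrt_lip:
  fixes w w' u c :: real
  assumes "c \<ge> 0"
  shows "sqrt ((w-u)^2 + c) \<le> sqrt ((w'-u)^2 + c) + \<bar>w - w'\<bar>"
proof -
  have "sqrt (((w'-u) + (w-w'))^2 + (sqrt c + 0)^2) \<le> sqrt ((w'-u)^2 + (sqrt c)^2) + sqrt ((w-w')^2 + 0^2)"
    by (rule minkowski2)
  thus ?thesis using assms by simp
qed

lemma backward:
  fixes \<phi> :: "real \<times> real \<Rightarrow> ereal"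
  assumes le: "\<forall>y. \<phi> y \<le> 0" and C: "Cr \<phi>"
  shows "\<exists>G. maximal_monotone G \<and> (\<forall>y. \<phi> y \<le> phiG G y)"
proof -
  define P where "P = {y. \<phi> y \<noteq> -\<infinity>}"
  define pv where "pv y = real_of_ereal (\<phi> y)" for y
  have pvE: "\<phi> y = ereal (pv y)" "pv y \<le> 0" if "y \<in> P" for y
  proof -
    have "\<phi> y \<noteq> -\<infinity>" "\<phi> y \<noteq> \<infinity>" using that le[rule_format, of y] unfolding P_def by auto
    thus "\<phi> y = ereal (pv y)" unfolding pv_def by (cases "\<phi> y") auto
    thus "pv y \<le> 0" using le[rule_format, of y] by (simp add: zero_ereal_def)
  qed
  define uu where "uu y = fst y + snd y" for y :: "real \<times> real"
  define vv where "vv y = snd y - fst y" for y :: "real \<times> real"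
  define R where "R y w = sqrt ((w - uu y)^2 + (- 4 * pv y))" for y w
  have cst_uv: "cst a b = ((uu a - uu b)^2 - (vv a - vv b)^2)/4" for a b
    unfolding cst_def uu_def vv_def by (simp add: power2_eq_square algebra_simps)
  have pair: "vv y0 - R y0 w \<le> vv y1 + R y1 w" if y0: "y0 \<in> P" and y1: "y1 \<in> P" for y0 y1 w
  proof -
    have H: "t*(1-t)*((vv y0 - vv y1)^2 - (uu y0 - uu y1)^2) \<le> (1-t)*(- 4 * pv y0) + t*(- 4 * pv y1)"
      if "0 \<le> t" "t \<le> 1" for t
    proof -
      have "(1-t)*pv y0 + t*pv y1 \<le> t*(1-t)*cst y0 y1"
        using C pvE(1)[OF y0] pvE(1)[OF y1] that unfolding Cr_def by blast
      thus ?thesis unfolding cst_uv by (simp add: algebra_simps)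
    qed
    have "vv y0 - vv y1 \<le> sqrt ((w - uu y0)^2 + (- 4 * pv y0)) + sqrt ((w - uu y1)^2 + (- 4 * pv y1))"
      by (rule pair_bound) (use pvE(2)[OF y0] pvE(2)[OF y1] H in auto)
    thus ?thesis unfolding R_def by simp
  qed
  have Rlip: "R y w \<le> R y w' + \<bar>w - w'\<bar>" if "y \<in> P" for y w w'
    unfolding R_def by (rule sqrt_lip) (use pvE(2)[OF that] in simp)
  define g where "g w = (if P = {} then 0 else Sup ((\<lambda>y. vv y - R y w) ` P))" for w
  have gb: "vv y - R y w \<le> g w \<and> g w \<le> vv y + R y w" if "y \<in> P" for y w
  proof -
    have ne: "P \<noteq> {}" using that by blast
    have bdd: "bdd_above ((\<lambda>y. vv y - R y w) ` P)"
      using pair[OF _ that] by (intro bdd_aboveI2) blast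
    have "vv y - R y w \<le> Sup ((\<lambda>y. vv y - R y w) ` P)" by (rule cSUP_upper[OF that bdd])
    moreover have "Sup ((\<lambda>y. vv y - R y w) ` P) \<le> vv y + R y w"
      by (rule cSUP_least[OF ne]) (use pair[OF _ that] in blast)
    ultimately show ?thesis unfolding g_def using ne by simp
  qed
  have glip1: "g w' \<le> g w + \<bar>w - w'\<bar>" for w w'
  proof (cases "P = {}")
    case True thus ?thesis unfolding g_def by simp
  next
    case False
    show ?thesis unfolding g_def[of w'] using False
    proof (simp, intro cSUP_least[OF False])
      fix y assume y: "y \<in> P"
      have "vv y - R y w' \<le> vv y - R y w + \<bar>w - w'\<bar>" using Rlip[OF y, of w w'] by simp
      also have "\<dots> \<le> g w + \<bar>w - w'\<bar>" using gb[OF y, of w] by simp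
      finally show "vv y - R y w' \<le> g w + \<bar>w - w'\<bar>" .
    qed
  qed
  have glip: "(g w - g w')^2 \<le> (w - w')^2" for w w'
  proof -
    have "\<bar>g w - g w'\<bar> \<le> \<bar>w - w'\<bar>" using glip1[of w w'] glip1[of w' w] by (simp add: abs_le_iff abs_minus_commute)
    thus ?thesis by (simp add: abs_le_square_iff)
  qed
  define pt where "pt w = ((w - g w)/2, (w + g w)/2)" for w
  define G where "G = range pt"
  have uupt: "uu (pt w) = w" "vv (pt w) = g w" for w unfolding uu_def vv_def pt_def by (simp_all add: field_simps)
  have monG: "monotone_set G" unfolding monotone_set_def G_def
  proof (intro ballI)
    fix r s assume "r \<in> range pt" "s \<in> range pt"
    then obtain w w' where "r = pt w" "s = pt w'" by blast
    thus "cst r s \<ge> 0" unfolding cst_uv using glip[of w w'] by (simp add: uupt)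
  qed
  have maxG: "maximal_monotone G" unfolding maximal_monotone_def
  proof (intro conjI allI impI monG)
    fix H assume HH: "monotone_set H \<and> G \<subseteq> H"
    show "H = G"
    proof
      show "G \<subseteq> H" using HH by blast
      show "H \<subseteq> G"
      proof
        fix z assume z: "z \<in> H"
        define w where "w = uu z"
        have "pt w \<in> H" using HH unfolding G_def by blast
        hence "cst z (pt w) \<ge> 0" using HH z unfolding monotone_set_def by blast
        hence "(vv z - g w)^2 \<le> 0" unfolding cst_uv uupt w_def by simp
        hence "vv z = g w" by simp
        hence "z = pt w" unfolding pt_def w_def uu_def vv_def
          by (cases z) (simp add: field_simps)
        thus "z \<in> G" unfolding G_def by blast
      qed
    qed
  qed
  have dom: "\<phi> y \<le> phiG G y" for y
    unfolding phiG_def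
  proof (rule INF_greatest)
    fix x assume "x \<in> G"
    then obtain w where x: "x = pt w" unfolding G_def by blast
    show "\<phi> y \<le> ereal (cst x y)"
    proof (cases "y \<in> P")
      case False thus ?thesis unfolding P_def by simp
    next
      case True
      have b: "\<bar>g w - vv y\<bar> \<le> R y w" using gb[OF True, of w] by (simp add: abs_le_iff)
      have "(g w - vv y)^2 \<le> (R y w)^2"
        using b by (metis abs_ge_zero abs_le_square_iff abs_of_nonneg order_trans real_sqrt_ge_zero R_def)
      also have "\<dots> = (w - uu y)^2 - 4 * pv y" unfolding R_def using pvE(2)[OF True] by (simp add: add_nonneg_nonneg[OF zero_le_power2] order_trans[OF _ zero_le_power2])
      finally have "pv y \<le> cst x y" unfolding x cst_uv uupt by simp
      thus ?thesis using pvE(1)[OF True] by simp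
    qed
  qed
  show ?thesis using maxG dom by blast
qed



lemma comb_fin:
  fixes x z :: ereal and a q :: real
  assumes "0 < a" "a < 1" "x \<le> 0" "z \<le> 0" "ereal a * x + ereal (1-a) * z = ereal q"
  shows "\<exists>p p'. x = ereal p \<and> z = ereal p' \<and> q = a*p + (1-a)*p'"
  using assms by (cases x; cases z) auto

lemma comb_le0:
  fixes x z :: ereal and a :: real
  assumes "0 \<le> a" "a \<le> 1" "x \<le> 0" "z \<le> 0"
  shows "ereal a * x + ereal (1-a) * z \<le> 0"
  using assms by (cases x; cases z) (auto simp: mult_nonneg_nonpos add_nonpos_nonpos)

lemma convex_part:
  assumes d1: "\<phi>1 \<in> dominated_set" and d2: "\<phi>2 \<in> dominated_set" and a: "0 \<le> a" "a \<le> (1::real)"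
  shows "(\<lambda>y. ereal a * \<phi>1 y + ereal (1 - a) * \<phi>2 y) \<in> dominated_set"
proof (cases "a = 0 \<or> a = 1")
  case True
  thus ?thesis
  proof
    assume "a = 0"
    hence "(\<lambda>y. ereal a * \<phi>1 y + ereal (1 - a) * \<phi>2 y) = \<phi>2" by (simp add: zero_ereal_def[symmetric])
    thus ?thesis using d2 by simp
  next
    assume "a = 1"
    hence "(\<lambda>y. ereal a * \<phi>1 y + ereal (1 - a) * \<phi>2 y) = \<phi>1" by (simp add: zero_ereal_def[symmetric])
    thus ?thesis using d1 by simp
  qed
next
  case False
  hence a': "0 < a" "a < 1" using a by auto
  define \<psi> where "\<psi> = (\<lambda>y. ereal a * \<phi>1 y + ereal (1 - a) * \<phi>2 y)"
  have m1: "\<phi>1 \<in> borel_measurable borel" "\<forall>y. \<phi>1 y \<le> 0" "\<exists>G. maximal_monotone G \<and> (\<forall>y. \<phi>1 y \<le> phiG G y)"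
    using d1 unfolding dominated_set_def by auto
  have m2: "\<phi>2 \<in> borel_measurable borel" "\<forall>y. \<phi>2 y \<le> 0" "\<exists>G. maximal_monotone G \<and> (\<forall>y. \<phi>2 y \<le> phiG G y)"
    using d2 unfolding dominated_set_def by auto
  have meas: "\<psi> \<in> borel_measurable borel" unfolding \<psi>_def using m1(1) m2(1) by measurable
  have le: "\<forall>y. \<psi> y \<le> 0" unfolding \<psi>_def using comb_le0 a m1(2) m2(2) by blast
  have C1: "Cr \<phi>1" using m1(3) forward by blast
  have C2: "Cr \<phi>2" using m2(3) forward by blast
  have C: "Cr \<psi>" unfolding Cr_def
  proof (intro allI impI)
    fix y0 y1 :: "real \<times> real" and q0 q1 t :: real
    assume h: "\<psi> y0 = ereal q0" "\<psi> y1 = ereal q1" "0 \<le> t" "t \<le> 1"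
    obtain p0 p0' where e0: "\<phi>1 y0 = ereal p0" "\<phi>2 y0 = ereal p0'" "q0 = a*p0 + (1-a)*p0'"
      using comb_fin[OF a' m1(2)[rule_format] m2(2)[rule_format]] h(1) unfolding \<psi>_def by blast
    obtain p1 p1' where e1: "\<phi>1 y1 = ereal p1" "\<phi>2 y1 = ereal p1'" "q1 = a*p1 + (1-a)*p1'"
      using comb_fin[OF a' m1(2)[rule_format] m2(2)[rule_format]] h(2) unfolding \<psi>_def by blast
    have i1: "(1-t)*p0 + t*p1 \<le> t*(1-t)*cst y0 y1" using C1 e0 e1 h unfolding Cr_def by blast
    have i2: "(1-t)*p0' + t*p1' \<le> t*(1-t)*cst y0 y1" using C2 e0 e1 h unfolding Cr_def by blast
    have "a*((1-t)*p0 + t*p1) + (1-a)*((1-t)*p0' + t*p1') \<le> a*(t*(1-t)*cst y0 y1) + (1-a)*(t*(1-t)*cst y0 y1)"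
      using i1 i2 a' by (intro add_mono mult_left_mono) auto
    thus "(1-t)*q0 + t*q1 \<le> t*(1-t)*cst y0 y1" unfolding e0(3) e1(3) by (simp add: algebra_simps)
  qed
  have "\<exists>G. maximal_monotone G \<and> (\<forall>y. \<psi> y \<le> phiG G y)" by (rule backward[OF le C])
  thus ?thesis using meas le unfolding dominated_set_def \<psi>_def by blast
qed

theorem lemma9:
  fixes \<phi> :: "real \<times> real \<Rightarrow> ereal"
  assumes "\<phi> \<in> borel_measurable borel"
    and "\<forall>y. \<phi> y \<le> 0"
  shows "((\<exists>G. maximal_monotone G \<and> (\<forall>y. \<phi> y \<le> phiG G y)) \<longleftrightarrow>
           (\<forall>y0 y1 t. 0 \<le> t \<and> t \<le> 1 \<longrightarrow>
              ereal (1 - t) * \<phi> y0 + ereal t * \<phi> y1 \<le> ereal (t * (1 - t) * cst y0 y1))) \<and>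
         (\<forall>\<phi>1\<in>dominated_set. \<forall>\<phi>2\<in>dominated_set. \<forall>a::real. 0 \<le> a \<and> a \<le> 1 \<longrightarrow>
           (\<lambda>y. ereal a * \<phi>1 y + ereal (1 - a) * \<phi>2 y) \<in> dominated_set)"
proof
  show "(\<exists>G. maximal_monotone G \<and> (\<forall>y. \<phi> y \<le> phiG G y)) \<longleftrightarrow>
           (\<forall>y0 y1 t. 0 \<le> t \<and> t \<le> 1 \<longrightarrow>
              ereal (1 - t) * \<phi> y0 + ereal t * \<phi> y1 \<le> ereal (t * (1 - t) * cst y0 y1))"
    unfolding cond_equiv[OF assms(2)] using forward backward[OF assms(2)] by blast
  show "\<forall>\<phi>1\<in>dominated_set. \<forall>\<phi>2\<in>dominated_set. \<forall>a::real. 0 \<le> a \<and> a \<le> 1 \<longrightarrow>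
           (\<lambda>y. ereal a * \<phi>1 y + ereal (1 - a) * \<phi>2 y) \<in> dominated_set"
    using convex_part by blast
qed


end
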